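(* Let $p\ge 1$, $c>0$ and $\beta>0$ be constants. The boundary value problem $$x'''+c\,x^p\, x''=0\ \text{ on } [0,\infty),\qquad x(0)=0=x'(0),\qquad \lim_{t\to\infty}x'(t)=\beta$$ has at most one solution (i.e., its solution is unique). *)

theory Defs
  imports Complex_Main
begin

text \<open>A (classical) solution on [0,\<infinity>) of the boundary value problem
  x''' + c x^p x'' = 0,  x(0) = 0 = x'(0),  x'(t) \<rightarrow> \<beta> as t \<rightarrow> \<infinity>.
  Derivatives are one-sided at 0 (taken within [0,\<infinity>)). Since p is a real
  exponent, x^p is the real power (powr), meaningful for x \<ge> 0; a solution is
  required to be nonnegative so that the equation is well defined.\<close>

definition bvp_solution :: "real \<Rightarrow> real \<Rightarrow> real \<Rightarrow> (real \<Rightarrow> real) \<Rightarrow> bool" where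
  "bvp_solution p c \<beta> x \<longleftrightarrow>
     (\<exists>x1 x2 x3 :: real \<Rightarrow> real.
        (\<forall>t\<ge>0. (x has_real_derivative x1 t) (at t within {0..})
              \<and> (x1 has_real_derivative x2 t) (at t within {0..})
              \<and> (x2 has_real_derivative x3 t) (at t within {0..})
              \<and> x t \<ge> 0
              \<and> x3 t + c * (x t powr p) * x2 t = 0)
        \<and> x 0 = 0 \<and> x1 0 = 0
        \<and> (x1 \<longlongrightarrow> \<beta>) at_top)"

end

theory Submission
  imports Defs "HOL-Analysis.Analysis"
begin

lemma mvt_within:
  fixes f f' :: "real \<Rightarrow> real"
  assumes "a \<le> b" and "\<And>x. a \<le> x \<Longrightarrow> x \<le> b \<Longrightarrow> (f has_real_derivative f' x) (at x within {a..b})"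
  shows "\<exists>x\<in>{a..b}. f b - f a = f' x * (b - a)"
proof -
  have "\<exists>x\<in>{a..b}. f b - f a = (\<lambda>h. f' x * h) (b - a)"
    apply (rule mvt_very_simple[OF assms(1)])
    using assms(2) by (simp add: has_field_derivative_def)
  thus ?thesis by simp
qed

lemma nonpos_deriv_le:
  fixes f f' :: "real \<Rightarrow> real"
  assumes "a \<le> b" and "\<And>x. a \<le> x \<Longrightarrow> x \<le> b \<Longrightarrow> (f has_real_derivative f' x) (at x within {a..b})"
    and "\<And>x. a \<le> x \<Longrightarrow> x \<le> b \<Longrightarrow> f' x \<le> 0"
  shows "f b \<le> f a"
proof -
  obtain x where "x \<in> {a..b}" "f b - f a = f' x * (b - a)" using mvt_within[OF assms(1,2)] by blast
  moreover have "f' x * (b - a) \<le> 0" using assms(1,3) \<open>x \<in> {a..b}\<close>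
    by (simp add: mult_nonpos_nonneg)
  ultimately show ?thesis by simp
qed

lemma zero_deriv_eq:
  fixes f :: "real \<Rightarrow> real"
  assumes "a \<le> b" and "\<And>x. a \<le> x \<Longrightarrow> x \<le> b \<Longrightarrow> (f has_real_derivative 0) (at x within {a..b})"
  shows "f b = f a"
  using mvt_within[of a b f "\<lambda>_. 0"] assms by auto

lemma powr_lip_aux:
  fixes a b M p :: real
  assumes "p \<ge> 1" "0 \<le> b" "b < a" "a \<le> M"
  shows "a powr p - b powr p \<le> p * M powr (p - 1) * (a - b)"
proof -
  have cont: "continuous_on {b..a} (\<lambda>s. s powr p)"
    by (rule continuous_on_powr') (use assms in auto)
  have "\<exists>l z. b < z \<and> z < a \<and> DERIV (\<lambda>s. s powr p) z :> l \<and> a powr p - b powr p = (a - b) * l"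
    apply (rule MVT[OF assms(3) cont])
    using assms has_real_derivative_powr real_differentiable_def by (metis le_less_trans)
  then obtain l z where z: "b < z" "z < a" "DERIV (\<lambda>s. s powr p) z :> l" "a powr p - b powr p = (a - b) * l"
    by blast
  have "l = p * z powr (p - 1)"
    using DERIV_unique[OF z(3) has_real_derivative_powr] z assms by auto
  moreover have "z powr (p - 1) \<le> M powr (p - 1)"
    using z assms by (intro powr_mono2) auto
  ultimately show ?thesis using z assms
    by (simp add: mult.commute mult_left_mono)
qed

lemma powr_lip:
  fixes a b M p :: real
  assumes "p \<ge> 1" "0 \<le> a" "0 \<le> b" "a \<le> M" "b \<le> M"
  shows "\<bar>a powr p - b powr p\<bar> \<le> p * M powr (p - 1) * \<bar>a - b\<bar>"
proof -
  consider "a = b" | "b < a" | "a < b" by linarith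
  thus ?thesis
  proof cases
    case 2
    have "b powr p \<le> a powr p" using 2 assms by (intro powr_mono2) auto
    thus ?thesis using powr_lip_aux[OF assms(1,3) 2 assms(4)] 2 by simp
  next
    case 3
    have "a powr p \<le> b powr p" using 3 assms by (intro powr_mono2) auto
    thus ?thesis using powr_lip_aux[OF assms(1,2) 3 assms(5)] 3 by simp
  qed simp
qed


lemma cont_bound:
  fixes f :: "real \<Rightarrow> real"
  assumes "continuous_on {a..b} f"
  shows "\<exists>M. \<forall>t\<in>{a..b}. \<bar>f t\<bar> \<le> M"
proof -
  have "compact (f ` {a..b})" by (rule compact_continuous_image[OF assms compact_Icc])
  hence "bounded (f ` {a..b})" by (rule compact_imp_bounded)
  then obtain M where "\<forall>y\<in>f ` {a..b}. norm y \<le> M" by (auto simp: bounded_iff)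
  thus ?thesis by auto
qed

lemma key_ineq:
  fixes e1 e2 e3 d A B :: real
  assumes "A \<ge> 0" "B \<ge> 0" "\<bar>d\<bar> \<le> A * \<bar>e1\<bar> + B * \<bar>e3\<bar>"
  shows "2*e1*e2 + 2*e2*e3 + 2*e3*d \<le> (2 + A + 2*B) * (e1^2 + e2^2 + e3^2)"
proof -
  have h1: "2*e1*e2 \<le> e1^2 + e2^2"
  proof -
    have "0 \<le> (e1 - e2)^2" by simp
    thus ?thesis by (simp add: power2_eq_square algebra_simps)
  qed
  have h2: "2*e2*e3 \<le> e2^2 + e3^2"
  proof -
    have "0 \<le> (e2 - e3)^2" by simp
    thus ?thesis by (simp add: power2_eq_square algebra_simps)
  qed
  have h3: "2*e3*d \<le> 2*\<bar>e3\<bar>*\<bar>d\<bar>" by (simp add: abs_mult[symmetric] abs_ge_self mult.assoc)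
  have h4: "2*\<bar>e3\<bar>*\<bar>d\<bar> \<le> 2*\<bar>e3\<bar>*(A * \<bar>e1\<bar> + B * \<bar>e3\<bar>)"
    using assms(3) by (simp add: mult_left_mono)
  have h5: "2*\<bar>e1\<bar>*\<bar>e3\<bar> \<le> e1^2 + e3^2"
  proof -
    have "0 \<le> (\<bar>e1\<bar> - \<bar>e3\<bar>)^2" by simp
    thus ?thesis by (simp add: power2_eq_square algebra_simps)
  qed
  have h6: "A * (2*\<bar>e1\<bar>*\<bar>e3\<bar>) \<le> A * (e1^2 + e3^2)" by (rule mult_left_mono[OF h5 assms(1)])
  have h7: "\<bar>e3\<bar> * \<bar>e3\<bar> = e3^2" by (simp add: power2_eq_square abs_mult[symmetric])
  have eq: "2*\<bar>e3\<bar>*(A * \<bar>e1\<bar> + B * \<bar>e3\<bar>) = A * (2*\<bar>e1\<bar>*\<bar>e3\<bar>) + 2*B*e3^2"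
    using h7 by (simp add: algebra_simps)
  have eq2: "A * (e1^2 + e3^2) = A*e1^2 + A*e3^2" by (simp add: algebra_simps)
  have eq3: "(2 + A + 2*B) * (e1^2 + e2^2 + e3^2) = 2*e1^2+2*e2^2+2*e3^2 + A*e1^2+A*e2^2+A*e3^2 + 2*B*e1^2+2*B*e2^2+2*B*e3^2"
    by (simp add: algebra_simps)
  have "0 \<le> B * e1^2" "0 \<le> B * e2^2" "0 \<le> A * e2^2" "0 \<le> e1^2" "0 \<le> e3^2" using assms by simp_all
  then show ?thesis using h1 h2 h3 h4 h6 eq eq2 eq3 by linarith
qed


definition sol :: "real \<Rightarrow> real \<Rightarrow> (real \<Rightarrow> real) \<Rightarrow> (real \<Rightarrow> real) \<Rightarrow> (real \<Rightarrow> real) \<Rightarrow> (real \<Rightarrow> real) \<Rightarrow> bool" where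
  "sol p c u u1 u2 u3 \<longleftrightarrow> (\<forall>t\<ge>0. (u has_real_derivative u1 t) (at t within {0..})
              \<and> (u1 has_real_derivative u2 t) (at t within {0..})
              \<and> (u2 has_real_derivative u3 t) (at t within {0..})
              \<and> u t \<ge> 0
              \<and> u3 t + c * (u t powr p) * u2 t = 0)"

lemma ivp_unique:
  fixes p c T :: real and u u1 u2 u3 v v1 v2 v3 :: "real \<Rightarrow> real"
  assumes p: "p \<ge> 1" and c: "c > 0"
    and su: "sol p c u u1 u2 u3" and sv: "sol p c v v1 v2 v3"
    and i0: "u 0 = v 0" "u1 0 = v1 0" "u2 0 = v2 0"
    and T: "T \<ge> 0"
  shows "u T = v T \<and> u1 T = v1 T \<and> u2 T = v2 T"
proof -
  define S where "S = {0..T}"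
  have sub: "S \<subseteq> {0..}" by (auto simp: S_def)
  have dU: "(u has_real_derivative u1 t) (at t within S)" "(u1 has_real_derivative u2 t) (at t within S)"
     "(u2 has_real_derivative u3 t) (at t within S)" "u t \<ge> 0" "u3 t = - c * (u t powr p) * u2 t"
    if "t \<in> S" for t
  proof -
    have t0: "t \<ge> 0" using that by (simp add: S_def)
    have a: "(u has_real_derivative u1 t) (at t within {0..})" "(u1 has_real_derivative u2 t) (at t within {0..})"
     "(u2 has_real_derivative u3 t) (at t within {0..})" "u t \<ge> 0" "u3 t + c * (u t powr p) * u2 t = 0"
      using su t0 unfolding sol_def by blast+
    show "(u has_real_derivative u1 t) (at t within S)" "(u1 has_real_derivative u2 t) (at t within S)"
     "(u2 has_real_derivative u3 t) (at t within S)" using a(1-3) DERIV_subset[OF _ sub] by blast+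
    show "u t \<ge> 0" by (rule a(4))
    show "u3 t = - c * (u t powr p) * u2 t" using a(5) by linarith
  qed
  have dV: "(v has_real_derivative v1 t) (at t within S)" "(v1 has_real_derivative v2 t) (at t within S)"
     "(v2 has_real_derivative v3 t) (at t within S)" "v t \<ge> 0" "v3 t = - c * (v t powr p) * v2 t"
    if "t \<in> S" for t
  proof -
    have t0: "t \<ge> 0" using that by (simp add: S_def)
    have a: "(v has_real_derivative v1 t) (at t within {0..})" "(v1 has_real_derivative v2 t) (at t within {0..})"
     "(v2 has_real_derivative v3 t) (at t within {0..})" "v t \<ge> 0" "v3 t + c * (v t powr p) * v2 t = 0"
      using sv t0 unfolding sol_def by blast+
    show "(v has_real_derivative v1 t) (at t within S)" "(v1 has_real_derivative v2 t) (at t within S)"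
     "(v2 has_real_derivative v3 t) (at t within S)" using a(1-3) DERIV_subset[OF _ sub] by blast+
    show "v t \<ge> 0" by (rule a(4))
    show "v3 t = - c * (v t powr p) * v2 t" using a(5) by linarith
  qed
  have c1: "continuous_on S u" by (rule DERIV_continuous_on, rule dU(1))
  have c2: "continuous_on S v" by (rule DERIV_continuous_on, rule dV(1))
  have c3: "continuous_on S u2" by (rule DERIV_continuous_on, rule dU(3))
  have c4: "continuous_on S v2" by (rule DERIV_continuous_on, rule dV(3))
  from c1 c2 c3 c4 obtain M1 M2 M3 M4 where M: "\<forall>t\<in>S. \<bar>u t\<bar> \<le> M1" "\<forall>t\<in>S. \<bar>v t\<bar> \<le> M2"
    "\<forall>t\<in>S. \<bar>u2 t\<bar> \<le> M3" "\<forall>t\<in>S. \<bar>v2 t\<bar> \<le> M4"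
    using cont_bound[of 0 T] unfolding S_def by meson
  define M where "M = max 0 (max (max M1 M2) (max M3 M4))"
  have M0: "M \<ge> 0" by (simp add: M_def)
  have bnd: "0 \<le> u t" "u t \<le> M" "0 \<le> v t" "v t \<le> M" "\<bar>u2 t\<bar> \<le> M" "\<bar>v2 t\<bar> \<le> M"
    if "t \<in> S" for t
    using M that dU(4) dV(4) unfolding M_def by force+
  define L where "L = p * M powr (p - 1)"
  define A where "A = c * L * M"
  define B where "B = c * M powr p"
  have A0: "A \<ge> 0" using c p M0 by (simp add: A_def L_def)
  have B0: "B \<ge> 0" using c by (simp add: B_def)
  have dbound: "\<bar>u3 t - v3 t\<bar> \<le> A * \<bar>u t - v t\<bar> + B * \<bar>u2 t - v2 t\<bar>" if t: "t \<in> S" for t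
  proof -
    note b = bnd[OF t]
    have lip: "\<bar>u t powr p - v t powr p\<bar> \<le> L * \<bar>u t - v t\<bar>"
      unfolding L_def using powr_lip[OF p b(1,3,2,4)] .
    have vp: "v t powr p \<le> M powr p" using b p by (intro powr_mono2) auto
    have "u3 t - v3 t = - c * ((u t powr p - v t powr p) * u2 t + v t powr p * (u2 t - v2 t))"
      using dU(5)[OF t] dV(5)[OF t] by (simp add: algebra_simps)
    hence "\<bar>u3 t - v3 t\<bar> = c * \<bar>(u t powr p - v t powr p) * u2 t + v t powr p * (u2 t - v2 t)\<bar>"
      using c by (simp add: abs_mult)
    also have "\<dots> \<le> c * (\<bar>u t powr p - v t powr p\<bar> * \<bar>u2 t\<bar> + v t powr p * \<bar>u2 t - v2 t\<bar>)"
      using c by (intro mult_left_mono) (auto simp: abs_mult intro: order_trans[OF abs_triangle_ineq])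
    also have "\<dots> \<le> c * ((L * \<bar>u t - v t\<bar>) * M + M powr p * \<bar>u2 t - v2 t\<bar>)"
      using c lip vp b(5) by (intro mult_left_mono add_mono mult_mono mult_right_mono) auto
    also have "\<dots> = A * \<bar>u t - v t\<bar> + B * \<bar>u2 t - v2 t\<bar>"
      by (simp add: A_def B_def algebra_simps)
    finally show ?thesis .
  qed
  define K where "K = 2 + A + 2 * B"
  define E where "E t = (u t - v t)^2 + (u1 t - v1 t)^2 + (u2 t - v2 t)^2" for t
  define D where "D t = 2*(u t - v t)*(u1 t - v1 t) + 2*(u1 t - v1 t)*(u2 t - v2 t) + 2*(u2 t - v2 t)*(u3 t - v3 t)" for t
  define g where "g t = exp (- K * t) * E t" for t
  have dg: "(g has_real_derivative (exp (- K * t) * (D t - K * E t))) (at t within S)" if t: "t \<in> S" for t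
  proof -
    have e1: "((\<lambda>t. (u t - v t)^2) has_real_derivative 2*(u t - v t)*(u1 t - v1 t)) (at t within S)"
      by (rule DERIV_cong[OF DERIV_power[OF DERIV_diff[OF dU(1)[OF t] dV(1)[OF t]], of 2]]) (simp add: algebra_simps)
    have e2: "((\<lambda>t. (u1 t - v1 t)^2) has_real_derivative 2*(u1 t - v1 t)*(u2 t - v2 t)) (at t within S)"
      by (rule DERIV_cong[OF DERIV_power[OF DERIV_diff[OF dU(2)[OF t] dV(2)[OF t]], of 2]]) (simp add: algebra_simps)
    have e3: "((\<lambda>t. (u2 t - v2 t)^2) has_real_derivative 2*(u2 t - v2 t)*(u3 t - v3 t)) (at t within S)"
      by (rule DERIV_cong[OF DERIV_power[OF DERIV_diff[OF dU(3)[OF t] dV(3)[OF t]], of 2]]) (simp add: algebra_simps)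
    have dE: "(E has_real_derivative D t) (at t within S)"
      unfolding E_def[abs_def] D_def using DERIV_add[OF DERIV_add[OF e1 e2] e3] by simp
    have dx: "((\<lambda>t. exp (- K * t)) has_real_derivative (exp (- K * t) * (- K))) (at t within S)"
      by (rule derivative_eq_intros refl | simp)+
    have "(g has_real_derivative (exp (- K * t) * (- K)) * E t + exp (- K * t) * D t) (at t within S)"
      unfolding g_def[abs_def] by (rule DERIV_cong[OF DERIV_mult[OF dx dE]]) (simp add: algebra_simps)
    thus ?thesis by (simp add: algebra_simps)
  qed
  have "g T \<le> g 0"
  proof (rule nonpos_deriv_le[OF T])
    fix t assume "0 \<le> t" "t \<le> T"
    hence t: "t \<in> S" by (simp add: S_def)
    show "(g has_real_derivative (exp (- K * t) * (D t - K * E t))) (at t within {0..T})"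
      using dg[OF t] by (simp add: S_def)
    have "D t \<le> K * E t" unfolding D_def E_def K_def
      by (rule key_ineq[OF A0 B0 dbound[OF t]])
    thus "exp (- K * t) * (D t - K * E t) \<le> 0" by (simp add: mult_nonneg_nonpos)
  qed
  moreover have "g 0 = 0" using i0 by (simp add: g_def E_def)
  ultimately have "E T \<le> 0" by (simp add: g_def mult_le_0_iff)
  moreover have "0 \<le> (u T - v T)^2" "0 \<le> (u1 T - v1 T)^2" "0 \<le> (u2 T - v2 T)^2" by simp_all
  ultimately have "(u T - v T)^2 = 0" "(u1 T - v1 T)^2 = 0" "(u2 T - v2 T)^2 = 0"
    unfolding E_def by linarith+
  thus ?thesis by simp
qed


lemma image_scale: "(\<lambda>s::real. l * s) ` {0..} = {0..}" if "l > 0"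
proof
  show "(\<lambda>s. l * s) ` {0..} \<subseteq> {0..}" using that by auto
  show "{0..} \<subseteq> (\<lambda>s. l * s) ` {0..}"
  proof
    fix x :: real assume "x \<in> {0..}"
    hence "x = l * (x / l)" "x / l \<in> {0..}" using that by auto
    thus "x \<in> (\<lambda>s. l * s) ` {0..}" by blast
  qed
qed

lemma scale_deriv:
  fixes f f' :: "real \<Rightarrow> real" and l a t :: real
  assumes l: "l > 0" and t: "t \<ge> 0"
    and d: "(f has_real_derivative f' (l * t)) (at (l * t) within {0..})"
  shows "((\<lambda>t. l powr a * f (l * t)) has_real_derivative l powr (a + 1) * f' (l * t)) (at t within {0..})"
proof -
  have d': "(f has_real_derivative f' (l * t)) (at ((\<lambda>s. l * s) t) within ((\<lambda>s. l * s) ` {0..}))"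
    using d image_scale[OF l] by simp
  have g: "((\<lambda>s. l * s) has_real_derivative l) (at t within {0..})"
    by (rule derivative_eq_intros refl | simp)+
  have "(f \<circ> (\<lambda>s. l * s) has_real_derivative f' (l * t) * l) (at t within {0..})"
    by (rule DERIV_image_chain[OF d' g])
  hence "((\<lambda>t. l powr a * f (l * t)) has_real_derivative l powr a * (f' (l * t) * l)) (at t within {0..})"
    using DERIV_cmult[of "f \<circ> (\<lambda>s. l * s)" _ _ _ "l powr a"] by (simp add: o_def)
  moreover have "l powr a * (f' (l * t) * l) = l powr (a + 1) * f' (l * t)"
    using l by (simp add: powr_add)
  ultimately show ?thesis by simp
qed

lemma scale_sol:
  fixes p c l :: real
  assumes p: "p \<ge> 1" and l: "l > 0" and s: "sol p c y y1 y2 y3"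
  shows "sol p c (\<lambda>t. l powr (1/p) * y (l * t)) (\<lambda>t. l powr (1/p + 1) * y1 (l * t))
            (\<lambda>t. l powr (1/p + 2) * y2 (l * t)) (\<lambda>t. l powr (1/p + 3) * y3 (l * t))"
  unfolding sol_def
proof (intro allI impI conjI)
  fix t :: real assume t: "t \<ge> 0"
  have lt: "l * t \<ge> 0" using l t by simp
  have a: "(y has_real_derivative y1 (l*t)) (at (l*t) within {0..})" "(y1 has_real_derivative y2 (l*t)) (at (l*t) within {0..})"
     "(y2 has_real_derivative y3 (l*t)) (at (l*t) within {0..})" "y (l*t) \<ge> 0" "y3 (l*t) + c * (y (l*t) powr p) * y2 (l*t) = 0"
    using s lt unfolding sol_def by blast+
  show "((\<lambda>t. l powr (1/p) * y (l * t)) has_real_derivative l powr (1/p + 1) * y1 (l * t)) (at t within {0..})"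
    by (rule scale_deriv[where f=y and f'=y1, OF l t a(1)])
  show "((\<lambda>t. l powr (1/p + 1) * y1 (l * t)) has_real_derivative l powr (1/p + 2) * y2 (l * t)) (at t within {0..})"
    using scale_deriv[where f=y1 and f'=y2 and a="1/p+1", OF l t a(2)] by (simp add: add.assoc)
  show "((\<lambda>t. l powr (1/p + 2) * y2 (l * t)) has_real_derivative l powr (1/p + 3) * y3 (l * t)) (at t within {0..})"
    using scale_deriv[where f=y2 and f'=y3 and a="1/p+2", OF l t a(3)] by (simp add: add.assoc)
  show "0 \<le> l powr (1/p) * y (l * t)" using a(4) by simp
  have pw: "(l powr (1/p) * y (l * t)) powr p = l * y (l * t) powr p"
    using l p a(4) by (simp add: powr_mult powr_powr)
  have l3: "l * l powr (1/p + 2) = l powr (1/p + 3)"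
    using l by (simp add: powr_add power3_eq_cube power2_eq_square)
  have "l powr (1/p + 3) * y3 (l * t) + c * (l powr (1/p) * y (l * t)) powr p * (l powr (1/p + 2) * y2 (l * t))
      = l powr (1/p + 3) * (y3 (l*t) + c * (y (l*t) powr p) * y2 (l*t))"
    unfolding pw l3[symmetric] by (simp add: algebra_simps)
  also have "\<dots> = 0" using a(5) by simp
  finally show "l powr (1/p + 3) * y3 (l * t) + c * (l powr (1/p) * y (l * t)) powr p * (l powr (1/p + 2) * y2 (l * t)) = 0" .
qed

lemma sign_sol:
  fixes p c \<beta> :: real
  assumes p: "p \<ge> 1" and c: "c > 0" and b: "\<beta> > 0" and s: "sol p c y y1 y2 y3"
    and y10: "y1 0 = 0" and lim: "(y1 \<longlongrightarrow> \<beta>) at_top"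
  shows "y2 0 > 0"
proof (rule ccontr)
  assume "\<not> y2 0 > 0"
  hence b0: "y2 0 \<le> 0" by simp
  have rep: "y2 T \<le> 0" if T: "T \<ge> 0" for T
  proof -
    define S where "S = {0..T}"
    have sub: "S \<subseteq> {0..}" by (auto simp: S_def)
    have a: "(y has_real_derivative y1 t) (at t within S)" "(y1 has_real_derivative y2 t) (at t within S)"
     "(y2 has_real_derivative y3 t) (at t within S)" "y t \<ge> 0" "y3 t + c * (y t powr p) * y2 t = 0"
      if "t \<in> S" for t
    proof -
      have t0: "t \<ge> 0" using that by (simp add: S_def)
      have a: "(y has_real_derivative y1 t) (at t within {0..})" "(y1 has_real_derivative y2 t) (at t within {0..})"
       "(y2 has_real_derivative y3 t) (at t within {0..})" "y t \<ge> 0" "y3 t + c * (y t powr p) * y2 t = 0"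
        using s t0 unfolding sol_def by blast+
      show "(y has_real_derivative y1 t) (at t within S)" "(y1 has_real_derivative y2 t) (at t within S)"
       "(y2 has_real_derivative y3 t) (at t within S)" using a(1-3) DERIV_subset[OF _ sub] by blast+
      show "y t \<ge> 0" "y3 t + c * (y t powr p) * y2 t = 0" using a(4,5) by blast+
    qed
    have cy: "continuous_on S y" by (rule DERIV_continuous_on, rule a(1))
    have cyp: "continuous_on S (\<lambda>s. y s powr p)"
      by (rule continuous_on_powr'[OF cy continuous_on_const]) (use a(4) p in auto)
    define F where "F t = integral {0..t} (\<lambda>s. y s powr p)" for t
    define h where "h t = y2 t * exp (c * F t)" for t
    have dF: "(F has_real_derivative y t powr p) (at t within S)" if "t \<in> S" for t
      unfolding F_def[abs_def] using integral_has_real_derivative[OF cyp[unfolded S_def]] that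
      by (simp add: S_def)
    have dh: "(h has_real_derivative 0) (at t within {0..T})" if "0 \<le> t" "t \<le> T" for t
    proof -
      have t: "t \<in> S" using that by (simp add: S_def)
      have de: "((\<lambda>t. exp (c * F t)) has_real_derivative exp (c * F t) * (c * y t powr p)) (at t within S)"
        by (rule DERIV_cong[OF DERIV_chain2[OF DERIV_exp DERIV_cmult[OF dF[OF t]]]]) simp
      have "(h has_real_derivative y3 t * exp (c * F t) + y2 t * (exp (c * F t) * (c * y t powr p))) (at t within S)"
        unfolding h_def[abs_def] by (rule DERIV_cong[OF DERIV_mult[OF a(3)[OF t] de]]) (simp add: algebra_simps)
      moreover have "y3 t * exp (c * F t) + y2 t * (exp (c * F t) * (c * y t powr p)) = 0"
      proof -
        have "y3 t * exp (c * F t) + y2 t * (exp (c * F t) * (c * y t powr p))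
            = exp (c * F t) * (y3 t + c * (y t powr p) * y2 t)" by (simp add: algebra_simps)
        thus ?thesis using a(5)[OF t] by simp
      qed
      ultimately show ?thesis by (simp add: S_def)
    qed
    have "h T = h 0" by (rule zero_deriv_eq[OF T dh])
    moreover have "h 0 = y2 0" by (simp add: h_def F_def)
    ultimately have "y2 T * exp (c * F T) = y2 0" by (simp add: h_def)
    hence "y2 T * exp (c * F T) \<le> 0" using b0 by simp
    thus "y2 T \<le> 0" by (simp add: mult_le_0_iff)
  qed
  have "y1 T \<le> 0" if T: "T \<ge> 0" for T
  proof -
    have "y1 T \<le> y1 0"
    proof (rule nonpos_deriv_le[OF T])
      fix t assume t: "0 \<le> t" "t \<le> T"
      have "(y1 has_real_derivative y2 t) (at t within {0..})" using s t unfolding sol_def by blast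
      thus "(y1 has_real_derivative y2 t) (at t within {0..T})" by (rule DERIV_subset) auto
      show "y2 t \<le> 0" by (rule rep[OF t(1)])
    qed
    thus ?thesis using y10 by simp
  qed
  hence "eventually (\<lambda>t. y1 t \<le> 0) at_top" by (intro eventually_mono[OF eventually_ge_at_top[of "0::real"]]) auto
  hence "\<beta> \<le> 0" using tendsto_upperbound[OF lim] by simp
  thus False using b by simp
qed


lemma bvp_sol:
  assumes "bvp_solution p c \<beta> x"
  obtains x1 x2 x3 where "sol p c x x1 x2 x3" "x 0 = 0" "x1 0 = 0" "(x1 \<longlongrightarrow> \<beta>) at_top"
  using assms unfolding bvp_solution_def sol_def by blast

theorem theorem2:
  fixes p c \<beta> :: real and x y :: "real \<Rightarrow> real"
  assumes "p \<ge> 1" and "c > 0" and "\<beta> > 0"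
    and "bvp_solution p c \<beta> x" and "bvp_solution p c \<beta> y"
  shows "\<forall>t\<ge>0. x t = y t"
proof -
  note p = assms(1) and c = assms(2) and b = assms(3)
  obtain x1 x2 x3 where sx: "sol p c x x1 x2 x3" "x 0 = 0" "x1 0 = 0" "(x1 \<longlongrightarrow> \<beta>) at_top"
    using bvp_sol[OF assms(4)] by blast
  obtain y1 y2 y3 where sy: "sol p c y y1 y2 y3" "y 0 = 0" "y1 0 = 0" "(y1 \<longlongrightarrow> \<beta>) at_top"
    using bvp_sol[OF assms(5)] by blast
  have a0: "x2 0 > 0" by (rule sign_sol[OF p c b sx(1,3,4)])
  have b0: "y2 0 > 0" by (rule sign_sol[OF p c b sy(1,3,4)])
  define q where "q = 1/p + 2"
  have q0: "q > 0" using p by (simp add: q_def add_pos_nonneg)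
  define l where "l = (x2 0 / y2 0) powr (1/q)"
  have l0: "l > 0" using a0 b0 by (simp add: l_def)
  have lq: "l powr q = x2 0 / y2 0" using a0 b0 q0 by (simp add: l_def powr_powr)
  have ss: "sol p c (\<lambda>t. l powr (1/p) * y (l * t)) (\<lambda>t. l powr (1/p + 1) * y1 (l * t))
            (\<lambda>t. l powr (1/p + 2) * y2 (l * t)) (\<lambda>t. l powr (1/p + 3) * y3 (l * t))"
    by (rule scale_sol[OF p l0 sy(1)])
  have i2: "x2 0 = l powr (1/p + 2) * y2 (l * 0)"
    using lq b0 by (simp add: q_def)
  have eq: "x T = l powr (1/p) * y (l * T) \<and> x1 T = l powr (1/p + 1) * y1 (l * T)" if "T \<ge> 0" for T
  proof -
    have i0: "x 0 = l powr (1/p) * y (l * 0)" using sx(2) sy(2) by simp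
    have i1: "x1 0 = l powr (1/p + 1) * y1 (l * 0)" using sx(3) sy(3) by simp
    have "x T = l powr (1/p) * y (l * T) \<and> x1 T = l powr (1/p + 1) * y1 (l * T) \<and> x2 T = l powr (1/p + 2) * y2 (l * T)"
      by (rule ivp_unique[OF p c sx(1) ss i0 i1 i2 that])
    thus ?thesis by (elim conjE) (intro conjI)
  qed
  have "filterlim (\<lambda>t. l * t) at_top at_top"
    by (rule filterlim_tendsto_pos_mult_at_top[OF tendsto_const l0 filterlim_ident])
  hence "((\<lambda>t. y1 (l * t)) \<longlongrightarrow> \<beta>) at_top" by (rule filterlim_compose[OF sy(4)])
  hence lim2: "((\<lambda>t. l powr (1/p + 1) * y1 (l * t)) \<longlongrightarrow> l powr (1/p + 1) * \<beta>) at_top"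
    by (intro tendsto_mult tendsto_const)
  have ev: "eventually (\<lambda>t. x1 t = l powr (1/p + 1) * y1 (l * t)) at_top"
    by (intro eventually_mono[OF eventually_ge_at_top[of "0::real"]]) (use eq in auto)
  have "(x1 \<longlongrightarrow> l powr (1/p + 1) * \<beta>) at_top" using tendsto_cong[OF ev] lim2 by simp
  hence "\<beta> = l powr (1/p + 1) * \<beta>" by (rule tendsto_unique[OF trivial_limit_at_top_linorder sx(4)])
  hence "l powr (1/p + 1) = 1" using b by simp
  moreover have "1/p + 1 \<noteq> 0" using p by (simp add: add_nonneg_eq_0_iff)
  ultimately have l1: "l = 1" using powr_eq_one_iff_gen[OF l0] by (cases "l = 1") auto
  show ?thesis using eq l1 by simp
qed

end
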